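(* Let $(M,d)$ be a complete pointed metric space and $f\in\mathrm{Lip}_0(M,M)$ such that $\mathrm{int}(R_{\widehat f})\neq\emptyset$ and the orbit $\{f^n(x):n\in\mathbb N\}$ is finite for every $x\in M$. Then $R_{\widehat f}=\mathcal F(M)$.
   Context: A pointed metric space is a metric space with a distinguished point $0$. $\mathrm{Lip}_0(M,M)$ denotes the Lipschitz maps $f:M\to M$ with $f(0)=0$; $\mathrm{Lip}_0(M)$ the real-valued Lipschitz functions vanishing at $0$ normed by the Lipschitz constant. $\delta:M\to\mathrm{Lip}_0(M)^*$, $\delta(x)(\varphi)=\varphi(x)$; $\mathcal F(M)$ is the norm-closed linear span of $\delta(M)$. $\widehat f$ is the unique bounded linear operator on $\mathcal F(M)$ with $\widehat f(\delta(x))=\delta(f(x))$. For an operator $T$, $R_T=\{\mu:\liminf_{n}\|T^n\mu-\mu\|=0\}$. *)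

theory Defs
  imports "HOL-Analysis.Analysis"
begin

text \<open>The pointed metric space is the whole
type 'a with base point x0. Elements of Lip_0(M)^* are represented as
functionals on real-valued functions, vanishing outside Lip_0(M).\<close>

definition lip0 :: "'a::metric_space \<Rightarrow> ('a \<Rightarrow> real) \<Rightarrow> bool" where
  "lip0 x0 \<phi> \<longleftrightarrow> \<phi> x0 = 0 \<and> (\<exists>C. C-lipschitz_on UNIV \<phi>)"

definition lipball :: "'a::metric_space \<Rightarrow> ('a \<Rightarrow> real) set" where
  "lipball x0 = {\<phi>. \<phi> x0 = 0 \<and> 1-lipschitz_on UNIV \<phi>}"

definition delta :: "'a::metric_space \<Rightarrow> 'a \<Rightarrow> ('a \<Rightarrow> real) \<Rightarrow> real" where
  "delta x0 x = (\<lambda>\<phi>. if lip0 x0 \<phi> then \<phi> x else 0)"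

definition molecules :: "'a::metric_space \<Rightarrow> (('a \<Rightarrow> real) \<Rightarrow> real) set" where
  "molecules x0 = {(\<lambda>\<phi>. \<Sum>i<n. a i * delta x0 (p i) \<phi>) | (n::nat) a p. True}"

text \<open>F(M): norm closure (in Lip_0(M)^*) of the span of delta(M).\<close>
definition freespace :: "'a::metric_space \<Rightarrow> (('a \<Rightarrow> real) \<Rightarrow> real) set" where
  "freespace x0 = {\<mu>. (\<forall>\<phi>. \<not> lip0 x0 \<phi> \<longrightarrow> \<mu> \<phi> = 0) \<and>
      (\<forall>\<epsilon>>0. \<exists>\<nu>\<in>molecules x0. \<forall>\<phi>\<in>lipball x0. \<bar>\<mu> \<phi> - \<nu> \<phi>\<bar> \<le> \<epsilon>)}"

definition fnorm :: "'a::metric_space \<Rightarrow> (('a \<Rightarrow> real) \<Rightarrow> real) \<Rightarrow> real" where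
  "fnorm x0 \<mu> = Sup ((\<lambda>\<phi>. \<bar>\<mu> \<phi>\<bar>) ` lipball x0)"

definition recurrent_set :: "'a::metric_space \<Rightarrow> ((('a \<Rightarrow> real) \<Rightarrow> real) \<Rightarrow> (('a \<Rightarrow> real) \<Rightarrow> real))
    \<Rightarrow> (('a \<Rightarrow> real) \<Rightarrow> real) set" where
  "recurrent_set x0 T = {\<mu> \<in> freespace x0.
      liminf (\<lambda>n. ereal (fnorm x0 ((T ^^ n) \<mu> - \<mu>))) = 0}"

end

theory Submission
  imports Defs
begin

definition mol :: "'a::metric_space \<Rightarrow> nat \<Rightarrow> (nat \<Rightarrow> real) \<Rightarrow> (nat \<Rightarrow> 'a) \<Rightarrow> ('a \<Rightarrow> real) \<Rightarrow> real" where
  "mol x0 n a p = (\<lambda>\<phi>. \<Sum>i<n. a i * delta x0 (p i) \<phi>)"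

definition bnd :: "'a::metric_space \<Rightarrow> (('a \<Rightarrow> real) \<Rightarrow> real) \<Rightarrow> bool" where
  "bnd x0 \<mu> \<longleftrightarrow> (\<exists>B. \<forall>\<phi>\<in>lipball x0. \<bar>\<mu> \<phi>\<bar> \<le> B)"

lemma lipball_zero: "(\<lambda>_. 0) \<in> lipball x0"
  unfolding lipball_def by (auto intro: lipschitz_onI)

lemma lipball_lip0: "\<phi> \<in> lipball x0 \<Longrightarrow> lip0 x0 \<phi>"
  unfolding lipball_def lip0_def by auto

lemma lipball_bound: "\<phi> \<in> lipball x0 \<Longrightarrow> \<bar>\<phi> x\<bar> \<le> dist x x0"
proof -
  assume a: "\<phi> \<in> lipball x0"
  then have "dist (\<phi> x) (\<phi> x0) \<le> 1 * dist x x0" "\<phi> x0 = 0"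
    unfolding lipball_def using lipschitz_onD[of 1 UNIV \<phi> x x0] by auto
  then show ?thesis by (simp add: dist_real_def)
qed

lemma fnorm_le: "(\<And>\<phi>. \<phi> \<in> lipball x0 \<Longrightarrow> \<bar>\<mu> \<phi>\<bar> \<le> B) \<Longrightarrow> fnorm x0 \<mu> \<le> B"
  unfolding fnorm_def using lipball_zero by (intro cSup_least) auto

lemma fnorm_ge: "bnd x0 \<mu> \<Longrightarrow> \<phi> \<in> lipball x0 \<Longrightarrow> \<bar>\<mu> \<phi>\<bar> \<le> fnorm x0 \<mu>"
  unfolding fnorm_def bnd_def by (intro cSup_upper) (auto simp: bdd_above_def)

lemma fnorm_nonneg: "bnd x0 \<mu> \<Longrightarrow> 0 \<le> fnorm x0 \<mu>"
  using fnorm_ge[OF _ lipball_zero] by (meson abs_ge_zero order_trans)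

lemma bnd_lin: "bnd x0 \<mu> \<Longrightarrow> bnd x0 \<nu> \<Longrightarrow> bnd x0 (\<lambda>\<phi>. a * \<mu> \<phi> + b * \<nu> \<phi>)"
proof -
  assume "bnd x0 \<mu>" "bnd x0 \<nu>"
  then obtain B1 B2 where B: "\<forall>\<phi>\<in>lipball x0. \<bar>\<mu> \<phi>\<bar> \<le> B1" "\<forall>\<phi>\<in>lipball x0. \<bar>\<nu> \<phi>\<bar> \<le> B2"
    unfolding bnd_def by auto
  have "\<bar>a * \<mu> \<phi> + b * \<nu> \<phi>\<bar> \<le> \<bar>a\<bar> * B1 + \<bar>b\<bar> * B2" if "\<phi> \<in> lipball x0" for \<phi>
  proof -
    have "\<bar>a * \<mu> \<phi> + b * \<nu> \<phi>\<bar> \<le> \<bar>a\<bar> * \<bar>\<mu> \<phi>\<bar> + \<bar>b\<bar> * \<bar>\<nu> \<phi>\<bar>"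
      by (metis abs_mult abs_triangle_ineq)
    also have "\<dots> \<le> \<bar>a\<bar> * B1 + \<bar>b\<bar> * B2"
      using B that by (intro add_mono mult_left_mono) auto
    finally show ?thesis .
  qed
  then show ?thesis unfolding bnd_def by blast
qed

lemma fnorm_lin: "bnd x0 \<mu> \<Longrightarrow> bnd x0 \<nu> \<Longrightarrow>
   fnorm x0 (\<lambda>\<phi>. a * \<mu> \<phi> + b * \<nu> \<phi>) \<le> \<bar>a\<bar> * fnorm x0 \<mu> + \<bar>b\<bar> * fnorm x0 \<nu>"
proof (rule fnorm_le)
  fix \<phi> assume "bnd x0 \<mu>" "bnd x0 \<nu>" "\<phi> \<in> lipball x0"
  have "\<bar>a * \<mu> \<phi> + b * \<nu> \<phi>\<bar> \<le> \<bar>a\<bar> * \<bar>\<mu> \<phi>\<bar> + \<bar>b\<bar> * \<bar>\<nu> \<phi>\<bar>"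
    by (metis abs_mult abs_triangle_ineq)
  also have "\<dots> \<le> \<bar>a\<bar> * fnorm x0 \<mu> + \<bar>b\<bar> * fnorm x0 \<nu>"
    using fnorm_ge \<open>bnd x0 \<mu>\<close> \<open>bnd x0 \<nu>\<close> \<open>\<phi> \<in> lipball x0\<close> by (intro add_mono mult_left_mono) auto
  finally show "\<bar>a * \<mu> \<phi> + b * \<nu> \<phi>\<bar> \<le> \<bar>a\<bar> * fnorm x0 \<mu> + \<bar>b\<bar> * fnorm x0 \<nu>" .
qed

lemma minus_lin: "((\<mu>::('a \<Rightarrow> real) \<Rightarrow> real) - \<nu>) = (\<lambda>\<phi>. 1 * \<mu> \<phi> + (-1) * \<nu> \<phi>)"
  by (rule ext) simp

lemma mol_bnd: "bnd x0 (mol x0 n a p)"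
proof -
  have "\<bar>mol x0 n a p \<phi>\<bar> \<le> (\<Sum>i<n. \<bar>a i\<bar> * dist (p i) x0)" if "\<phi> \<in> lipball x0" for \<phi>
  proof -
    have "\<bar>mol x0 n a p \<phi>\<bar> \<le> (\<Sum>i<n. \<bar>a i * delta x0 (p i) \<phi>\<bar>)"
      unfolding mol_def by (rule sum_abs)
    also have "\<dots> \<le> (\<Sum>i<n. \<bar>a i\<bar> * dist (p i) x0)"
      using that lipball_lip0[OF that] lipball_bound[OF that]
      by (intro sum_mono) (auto simp: delta_def abs_mult intro: mult_left_mono)
    finally show ?thesis .
  qed
  then show ?thesis unfolding bnd_def by blast
qed

lemma mol_in: "mol x0 n a p \<in> molecules x0"
  unfolding mol_def molecules_def by blast

lemma molecules_mol: "\<nu> \<in> molecules x0 \<Longrightarrow> \<exists>n a p. \<nu> = mol x0 n a p"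
  unfolding mol_def molecules_def by blast

lemma mol_free: "mol x0 n a p \<in> freespace x0"
  unfolding freespace_def using mol_in
  by (auto simp: mol_def delta_def intro!: bexI[of _ "mol x0 n a p"])

lemma free_bnd: "\<mu> \<in> freespace x0 \<Longrightarrow> bnd x0 \<mu>"
proof -
  assume "\<mu> \<in> freespace x0"
  then have "\<exists>\<nu>\<in>molecules x0. \<forall>\<phi>\<in>lipball x0. \<bar>\<mu> \<phi> - \<nu> \<phi>\<bar> \<le> 1"
    unfolding freespace_def by auto
  then obtain \<nu> where \<nu>: "\<nu> \<in> molecules x0" "\<forall>\<phi>\<in>lipball x0. \<bar>\<mu> \<phi> - \<nu> \<phi>\<bar> \<le> 1"
    by auto
  then obtain n a p where "\<nu> = mol x0 n a p" using molecules_mol by blast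
  then obtain B where B: "\<forall>\<phi>\<in>lipball x0. \<bar>\<nu> \<phi>\<bar> \<le> B" using mol_bnd unfolding bnd_def by blast
  have "\<bar>\<mu> \<phi>\<bar> \<le> B + 1" if "\<phi> \<in> lipball x0" for \<phi>
    using B \<nu>(2) that by force
  then show ?thesis unfolding bnd_def by blast
qed

lemma mol_lin: "(\<lambda>\<phi>. c * mol x0 n a p \<phi> + d * mol x0 m b q \<phi>)
   = mol x0 (n + m) (\<lambda>i. if i < n then c * a i else d * b (i - n)) (\<lambda>i. if i < n then p i else q (i - n))"
proof (rule ext)
  fix \<phi>
  define g where "g = (\<lambda>i. (if i < n then c * a i else d * b (i - n)) * delta x0 (if i < n then p i else q (i - n)) \<phi>)"
  have "mol x0 (n + m) (\<lambda>i. if i < n then c * a i else d * b (i - n)) (\<lambda>i. if i < n then p i else q (i - n)) \<phi>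
     = (\<Sum>i<n+m. g i)" unfolding mol_def g_def by simp
  also have "\<dots> = (\<Sum>i<n. g i) + (\<Sum>i\<in>{n..<n+m}. g i)"
    unfolding lessThan_atLeast0 by (rule sum.atLeastLessThan_concat[symmetric]) auto
  also have "(\<Sum>i<n. g i) = c * mol x0 n a p \<phi>"
    unfolding mol_def g_def by (simp add: sum_distrib_left mult.assoc)
  also have "(\<Sum>i\<in>{n..<n+m}. g i) = (\<Sum>i\<in>{0..<m}. g (i+n))"
    using sum.shift_bounds_nat_ivl[of g 0 n m] by (simp add: add.commute)
  also have "\<dots> = d * mol x0 m b q \<phi>"
    unfolding mol_def g_def by (simp add: sum_distrib_left mult.assoc lessThan_atLeast0)
  finally show "c * mol x0 n a p \<phi> + d * mol x0 m b q \<phi> = mol x0 (n + m) (\<lambda>i. if i < n then c * a i else d * b (i - n)) (\<lambda>i. if i < n then p i else q (i - n)) \<phi>" by simp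
qed


lemma free_lin:
  assumes "\<mu> \<in> freespace x0" "\<nu> \<in> freespace x0"
  shows "(\<lambda>\<phi>. a * \<mu> \<phi> + b * \<nu> \<phi>) \<in> freespace x0"
proof -
  have z: "\<forall>\<phi>. \<not> lip0 x0 \<phi> \<longrightarrow> a * \<mu> \<phi> + b * \<nu> \<phi> = 0"
    using assms unfolding freespace_def by auto
  have "\<exists>\<rho>\<in>molecules x0. \<forall>\<phi>\<in>lipball x0. \<bar>a * \<mu> \<phi> + b * \<nu> \<phi> - \<rho> \<phi>\<bar> \<le> \<epsilon>" if "\<epsilon> > 0" for \<epsilon>
  proof -
    define e where "e = \<epsilon> / (\<bar>a\<bar> + \<bar>b\<bar> + 1)"
    have e: "e > 0" using that by (simp add: e_def add_nonneg_pos)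
    obtain m1 where m1: "m1 \<in> molecules x0" "\<forall>\<phi>\<in>lipball x0. \<bar>\<mu> \<phi> - m1 \<phi>\<bar> \<le> e"
      using assms(1) e unfolding freespace_def by auto
    obtain m2 where m2: "m2 \<in> molecules x0" "\<forall>\<phi>\<in>lipball x0. \<bar>\<nu> \<phi> - m2 \<phi>\<bar> \<le> e"
      using assms(2) e unfolding freespace_def by auto
    obtain n1 a1 p1 where 1: "m1 = mol x0 n1 a1 p1" using m1 molecules_mol by blast
    obtain n2 a2 p2 where 2: "m2 = mol x0 n2 a2 p2" using m2 molecules_mol by blast
    have mem: "(\<lambda>\<phi>. a * m1 \<phi> + b * m2 \<phi>) \<in> molecules x0"
      unfolding 1 2 mol_lin by (rule mol_in)
    have "\<bar>a * \<mu> \<phi> + b * \<nu> \<phi> - (a * m1 \<phi> + b * m2 \<phi>)\<bar> \<le> \<epsilon>" if "\<phi> \<in> lipball x0" for \<phi>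
    proof -
      have "\<bar>a * \<mu> \<phi> + b * \<nu> \<phi> - (a * m1 \<phi> + b * m2 \<phi>)\<bar> = \<bar>a * (\<mu> \<phi> - m1 \<phi>) + b * (\<nu> \<phi> - m2 \<phi>)\<bar>"
        by (simp add: algebra_simps)
      also have "\<dots> \<le> \<bar>a\<bar> * \<bar>\<mu> \<phi> - m1 \<phi>\<bar> + \<bar>b\<bar> * \<bar>\<nu> \<phi> - m2 \<phi>\<bar>"
        by (metis abs_mult abs_triangle_ineq)
      also have "\<dots> \<le> \<bar>a\<bar> * e + \<bar>b\<bar> * e"
        using m1 m2 that by (intro add_mono mult_left_mono) auto
      also have "\<dots> \<le> (\<bar>a\<bar> + \<bar>b\<bar> + 1) * e" using e by (simp add: algebra_simps)
      also have "\<dots> = \<epsilon>" unfolding e_def by (simp add: add_nonneg_pos)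
      finally show ?thesis .
    qed
    with mem show ?thesis by (intro bexI[of _ "(\<lambda>\<phi>. a * m1 \<phi> + b * m2 \<phi>)"]) auto
  qed
  with z show ?thesis unfolding freespace_def by auto
qed

lemma Tn_free: "\<forall>\<mu>\<in>freespace x0. T \<mu> \<in> freespace x0 \<Longrightarrow> \<mu> \<in> freespace x0 \<Longrightarrow> (T ^^ n) \<mu> \<in> freespace x0"
  by (induction n) auto

lemma Tn_lin:
  assumes T_maps: "\<forall>\<mu>\<in>freespace x0. T \<mu> \<in> freespace x0"
    and T_lin: "\<forall>\<mu>\<in>freespace x0. \<forall>\<nu>\<in>freespace x0. \<forall>a b::real.
        T (\<lambda>\<phi>. a * \<mu> \<phi> + b * \<nu> \<phi>) = (\<lambda>\<phi>. a * T \<mu> \<phi> + b * T \<nu> \<phi>)"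
    and "\<mu> \<in> freespace x0" "\<nu> \<in> freespace x0"
  shows "(T ^^ n) (\<lambda>\<phi>. a * \<mu> \<phi> + b * \<nu> \<phi>) = (\<lambda>\<phi>. a * (T ^^ n) \<mu> \<phi> + b * (T ^^ n) \<nu> \<phi>)"
proof (induction n)
  case 0 then show ?case by simp
next
  case (Suc n)
  have "(T ^^ Suc n) (\<lambda>\<phi>. a * \<mu> \<phi> + b * \<nu> \<phi>) = T (\<lambda>\<phi>. a * (T ^^ n) \<mu> \<phi> + b * (T ^^ n) \<nu> \<phi>)"
    using Suc by simp
  also have "\<dots> = (\<lambda>\<phi>. a * T ((T ^^ n) \<mu>) \<phi> + b * T ((T ^^ n) \<nu>) \<phi>)"
    using T_lin Tn_free[OF T_maps assms(3)] Tn_free[OF T_maps assms(4)] by blast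
  finally show ?case by simp
qed

lemma delta_mol: "delta x0 x = mol x0 1 (\<lambda>_. 1) (\<lambda>_. x)"
  unfolding mol_def by (rule ext) simp

lemma T_mol:
  assumes T_lin: "\<forall>\<mu>\<in>freespace x0. \<forall>\<nu>\<in>freespace x0. \<forall>a b::real.
        T (\<lambda>\<phi>. a * \<mu> \<phi> + b * \<nu> \<phi>) = (\<lambda>\<phi>. a * T \<mu> \<phi> + b * T \<nu> \<phi>)"
    and T_delta: "\<forall>x. T (delta x0 x) = delta x0 (f x)"
  shows "T (mol x0 k a p) = mol x0 k a (\<lambda>i. f (p i))"
proof (induction k)
  case 0
  have e: "mol x0 0 a p = (\<lambda>\<phi>. 0 * mol x0 0 a p \<phi> + 0 * mol x0 0 a p \<phi>)"
    by (simp add: mol_def)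
  have "T (mol x0 0 a p) = (\<lambda>\<phi>. 0 * T (mol x0 0 a p) \<phi> + 0 * T (mol x0 0 a p) \<phi>)"
    by (subst e) (use T_lin mol_free in blast)
  then show ?case by (simp add: mol_def)
next
  case (Suc k)
  have e: "mol x0 (Suc k) a p = (\<lambda>\<phi>. 1 * mol x0 k a p \<phi> + a k * delta x0 (p k) \<phi>)"
    by (rule ext) (simp add: mol_def)
  have "T (mol x0 (Suc k) a p) = (\<lambda>\<phi>. 1 * T (mol x0 k a p) \<phi> + a k * T (delta x0 (p k)) \<phi>)"
    unfolding e using T_lin mol_free[of x0] delta_mol[of x0] by metis
  also have "\<dots> = mol x0 (Suc k) a (\<lambda>i. f (p i))"
    using Suc T_delta by (intro ext) (simp add: mol_def)
  finally show ?case .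
qed

lemma Tn_mol:
  assumes T_lin: "\<forall>\<mu>\<in>freespace x0. \<forall>\<nu>\<in>freespace x0. \<forall>a b::real.
        T (\<lambda>\<phi>. a * \<mu> \<phi> + b * \<nu> \<phi>) = (\<lambda>\<phi>. a * T \<mu> \<phi> + b * T \<nu> \<phi>)"
    and T_delta: "\<forall>x. T (delta x0 x) = delta x0 (f x)"
  shows "(T ^^ n) (mol x0 k a p) = mol x0 k a (\<lambda>i. (f ^^ n) (p i))"
  by (induction n) (simp_all add: T_mol[OF T_lin T_delta])

lemma Tn_bdd:
  assumes T_maps: "\<forall>\<mu>\<in>freespace x0. T \<mu> \<in> freespace x0"
    and T_bdd: "\<exists>K. \<forall>\<mu>\<in>freespace x0. fnorm x0 (T \<mu>) \<le> K * fnorm x0 \<mu>"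
  shows "\<exists>B\<ge>0. \<forall>\<mu>\<in>freespace x0. fnorm x0 ((T ^^ n) \<mu>) \<le> B * fnorm x0 \<mu>"
proof -
  obtain K where K: "\<forall>\<mu>\<in>freespace x0. fnorm x0 (T \<mu>) \<le> K * fnorm x0 \<mu>" using T_bdd by blast
  have K': "fnorm x0 (T \<mu>) \<le> \<bar>K\<bar> * fnorm x0 \<mu>" if "\<mu> \<in> freespace x0" for \<mu>
  proof -
    have "0 \<le> fnorm x0 \<mu>" using fnorm_nonneg free_bnd that by blast
    then have "K * fnorm x0 \<mu> \<le> \<bar>K\<bar> * fnorm x0 \<mu>" by (simp add: mult_right_mono)
    then show ?thesis using K that by force
  qed
  have "\<forall>\<mu>\<in>freespace x0. fnorm x0 ((T ^^ n) \<mu>) \<le> \<bar>K\<bar> ^ n * fnorm x0 \<mu>"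
  proof (induction n)
    case 0 then show ?case by simp
  next
    case (Suc n)
    show ?case
    proof
      fix \<mu> assume "\<mu> \<in> freespace x0"
      have "fnorm x0 ((T ^^ Suc n) \<mu>) \<le> \<bar>K\<bar> * fnorm x0 ((T ^^ n) \<mu>)"
        using K' Tn_free[OF T_maps \<open>\<mu> \<in> freespace x0\<close>] by simp
      also have "\<dots> \<le> \<bar>K\<bar> * (\<bar>K\<bar> ^ n * fnorm x0 \<mu>)"
        using Suc \<open>\<mu> \<in> freespace x0\<close> by (intro mult_left_mono) auto
      finally show "fnorm x0 ((T ^^ Suc n) \<mu>) \<le> \<bar>K\<bar> ^ Suc n * fnorm x0 \<mu>" by (simp add: mult.assoc)
    qed
  qed
  then show ?thesis by (intro exI[of _ "\<bar>K\<bar> ^ n"]) auto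
qed

lemma mol_zero:
  assumes "fnorm x0 (mol x0 n a p) = 0"
  shows "mol x0 n a p = (\<lambda>_. 0)"
proof (rule ext)
  fix \<phi>
  show "mol x0 n a p \<phi> = 0"
  proof (cases "lip0 x0 \<phi>")
    case False then show ?thesis by (simp add: mol_def delta_def)
  next
    case True
    then obtain C where C: "C-lipschitz_on UNIV \<phi>" "\<phi> x0 = 0" unfolding lip0_def by auto
    have C0: "0 \<le> C" using lipschitz_on_nonneg[OF C(1)] .
    define \<psi> where "\<psi> = (\<lambda>x. (1 / (C + 1)) * \<phi> x)"
    have "(\<bar>1 / (C + 1)\<bar> * C)-lipschitz_on UNIV \<psi>"
      unfolding \<psi>_def by (rule lipschitz_on_cmult_real[OF C(1)])
    moreover have "\<bar>1 / (C + 1)\<bar> * C \<le> 1" using C0 by (simp add: field_simps)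
    ultimately have "1-lipschitz_on UNIV \<psi>" using lipschitz_on_mono by blast
    then have \<psi>: "\<psi> \<in> lipball x0" using C(2) unfolding lipball_def \<psi>_def by auto
    have "\<bar>mol x0 n a p \<psi>\<bar> \<le> 0" using fnorm_ge[OF mol_bnd[of x0 n a p] \<psi>] assms by simp
    moreover have "mol x0 n a p \<psi> = (1 / (C + 1)) * mol x0 n a p \<phi>"
      using True lipball_lip0[OF \<psi>] unfolding mol_def delta_def \<psi>_def
      by (simp add: sum_distrib_left algebra_simps)
    ultimately show ?thesis using C0 by (simp add: divide_le_0_iff)
  qed
qed

lemma liminf_zero_iff:
  assumes "\<And>n. 0 \<le> X n"
  shows "liminf (\<lambda>n. ereal (X n)) = 0 \<longleftrightarrow> (\<forall>\<delta>>0. \<forall>N. \<exists>n\<ge>N. X n < \<delta>)"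
proof
  assume L: "liminf (\<lambda>n. ereal (X n)) = 0"
  show "\<forall>\<delta>>0. \<forall>N. \<exists>n\<ge>N. X n < \<delta>"
  proof (intro allI impI, rule ccontr)
    fix \<delta> :: real and N assume "\<delta> > 0" "\<not> (\<exists>n\<ge>N. X n < \<delta>)"
    then have "eventually (\<lambda>n. ereal \<delta> \<le> ereal (X n)) sequentially"
      unfolding eventually_sequentially by (auto intro!: exI[of _ N] simp: not_less)
    then have "ereal \<delta> \<le> liminf (\<lambda>n. ereal (X n))" by (rule Liminf_bounded)
    with L \<open>\<delta> > 0\<close> show False by simp
  qed
next
  assume R: "\<forall>\<delta>>0. \<forall>N. \<exists>n\<ge>N. X n < \<delta>"
  have ge: "0 \<le> liminf (\<lambda>n. ereal (X n))"
    using assms by (intro Liminf_bounded) auto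
  have "\<not> 0 < liminf (\<lambda>n. ereal (X n))"
  proof
    assume "0 < liminf (\<lambda>n. ereal (X n))"
    then obtain z :: real where z: "0 < ereal z" "ereal z < liminf (\<lambda>n. ereal (X n))"
      using ereal_dense2 by blast
    then have "eventually (\<lambda>n. ereal (X n) > ereal z) sequentially" by (intro less_LiminfD)
    then obtain N where "\<forall>n\<ge>N. X n > z" unfolding eventually_sequentially by auto
    moreover obtain n where "n \<ge> N" "X n < z" using R z(1) by auto
    ultimately show False by force
  qed
  with ge show "liminf (\<lambda>n. ereal (X n)) = 0" by simp
qed


lemma residue:
  assumes T_maps: "\<forall>\<mu>\<in>freespace x0. T \<mu> \<in> freespace x0"
    and T_lin: "\<forall>\<mu>\<in>freespace x0. \<forall>\<nu>\<in>freespace x0. \<forall>a b::real.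
        T (\<lambda>\<phi>. a * \<mu> \<phi> + b * \<nu> \<phi>) = (\<lambda>\<phi>. a * T \<mu> \<phi> + b * T \<nu> \<phi>)"
    and T_bdd: "\<exists>K. \<forall>\<mu>\<in>freespace x0. fnorm x0 (T \<mu>) \<le> K * fnorm x0 \<mu>"
    and \<nu>: "\<nu> \<in> freespace x0"
    and rec: "\<forall>\<delta>>0. \<forall>N. \<exists>n\<ge>N. fnorm x0 ((T ^^ n) \<nu> - \<nu>) < \<delta>"
    and q: "q > (0::nat)"
  shows "\<forall>\<delta>>0. \<forall>N. \<exists>n\<ge>N. q dvd n \<and> fnorm x0 ((T ^^ n) \<nu> - \<nu>) < \<delta>"
proof -
  define P where "P r \<longleftrightarrow> (\<forall>\<delta>>0. \<forall>N. \<exists>n\<ge>N. n mod q = r mod q \<and> fnorm x0 ((T ^^ n) \<nu> - \<nu>) < \<delta>)" for r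
  have Tnfree: "(T ^^ n) \<nu> \<in> freespace x0" for n using Tn_free[OF T_maps \<nu>] .
  have dfree: "(T ^^ n) \<nu> - \<nu> \<in> freespace x0" for n
    unfolding minus_lin by (intro free_lin Tnfree \<nu>)
  have ex: "\<exists>r. P r"
  proof (rule ccontr)
    assume "\<nexists>r. P r"
    then have "\<forall>r. \<exists>\<delta> N. \<delta> > 0 \<and> (\<forall>n\<ge>N. n mod q = r mod q \<longrightarrow> \<delta> \<le> fnorm x0 ((T ^^ n) \<nu> - \<nu>))"
      unfolding P_def by (meson not_less)
    then obtain D Nf where DN: "\<And>r. D r > 0" "\<And>r n. n \<ge> Nf r \<Longrightarrow> n mod q = r mod q \<Longrightarrow> D r \<le> fnorm x0 ((T ^^ n) \<nu> - \<nu>)"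
      by metis
    define \<delta> where "\<delta> = Min (D ` {..<q})"
    define N where "N = Max (Nf ` {..<q})"
    have "\<delta> > 0" unfolding \<delta>_def using q DN(1) by (subst Min_gr_iff) auto
    then obtain n where n: "n \<ge> N" "fnorm x0 ((T ^^ n) \<nu> - \<nu>) < \<delta>" using rec by blast
    have r: "n mod q < q" using q by simp
    have "n \<ge> Nf (n mod q)" using n(1) r unfolding N_def
      by (meson Max_ge finite_imageI finite_lessThan imageI lessThan_iff order_trans)
    then have "D (n mod q) \<le> fnorm x0 ((T ^^ n) \<nu> - \<nu>)" using DN(2) by simp
    moreover have "\<delta> \<le> D (n mod q)" unfolding \<delta>_def using r by (intro Min_le) auto
    ultimately show False using n(2) by simp
  qed
  have add: "P (a + r)" if Pa: "P a" and Pr: "P r" for a r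
    unfolding P_def
  proof (intro allI impI)
    fix \<delta> :: real and N assume \<delta>: "\<delta> > 0"
    obtain n where n: "n \<ge> N" "n mod q = a mod q" "fnorm x0 ((T ^^ n) \<nu> - \<nu>) < \<delta> / 2"
      using Pa \<delta> unfolding P_def by (meson half_gt_zero)
    obtain B where B: "B \<ge> 0" "\<forall>\<mu>\<in>freespace x0. fnorm x0 ((T ^^ n) \<mu>) \<le> B * fnorm x0 \<mu>"
      using Tn_bdd[OF T_maps T_bdd] by blast
    have e: "\<delta> / (2 * (B + 1)) > 0" using \<delta> B by simp
    obtain m where m: "m \<ge> N" "m mod q = r mod q" "fnorm x0 ((T ^^ m) \<nu> - \<nu>) < \<delta> / (2 * (B + 1))"
      using Pr e unfolding P_def by blast
    have eq: "(T ^^ (n + m)) \<nu> - \<nu> = (\<lambda>\<phi>. 1 * (T ^^ n) ((T ^^ m) \<nu> - \<nu>) \<phi> + 1 * ((T ^^ n) \<nu> - \<nu>) \<phi>)"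
    proof -
      have "(T ^^ n) ((T ^^ m) \<nu> - \<nu>) = (\<lambda>\<phi>. 1 * (T ^^ n) ((T ^^ m) \<nu>) \<phi> + (-1) * (T ^^ n) \<nu> \<phi>)"
        unfolding minus_lin by (rule Tn_lin[OF T_maps T_lin Tnfree \<nu>])
      then show ?thesis by (intro ext) (simp add: funpow_add)
    qed
    have "fnorm x0 ((T ^^ (n + m)) \<nu> - \<nu>) \<le> \<bar>1\<bar> * fnorm x0 ((T ^^ n) ((T ^^ m) \<nu> - \<nu>)) + \<bar>1\<bar> * fnorm x0 ((T ^^ n) \<nu> - \<nu>)"
      unfolding eq by (intro fnorm_lin free_bnd Tn_free[OF T_maps] dfree)
    also have "\<dots> \<le> B * fnorm x0 ((T ^^ m) \<nu> - \<nu>) + \<delta> / 2"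
      using B(2) dfree n(3) by (intro add_mono) auto
    also have "B * fnorm x0 ((T ^^ m) \<nu> - \<nu>) \<le> B * (\<delta> / (2 * (B + 1)))"
      using m(3) B(1) by (intro mult_left_mono) auto
    also have "B * (\<delta> / (2 * (B + 1))) < \<delta> / 2"
      using B(1) \<delta> by (simp add: field_simps)
    finally have "fnorm x0 ((T ^^ (n + m)) \<nu> - \<nu>) < \<delta>" by simp
    moreover have "(n + m) mod q = (a + r) mod q" using n(2) m(2) by (metis mod_add_cong)
    ultimately show "\<exists>k\<ge>N. k mod q = (a + r) mod q \<and> fnorm x0 ((T ^^ k) \<nu> - \<nu>) < \<delta>"
      using n(1) by (intro exI[of _ "n + m"]) auto
  qed
  obtain r where Pr: "P r" using ex by blast
  have "P (Suc k * r)" for k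
  proof (induction k)
    case 0 then show ?case using Pr by simp
  next
    case (Suc k)
    have "P (r + Suc k * r)" by (rule add[OF Pr Suc])
    then show ?case by (simp add: algebra_simps)
  qed
  from this[of "q - 1"] have "P (q * r)" using q by simp
  then show ?thesis unfolding P_def by (simp add: dvd_eq_mod_eq_0)
qed


theorem theorem3p19:
  fixes x0 :: "'a::complete_space" and f :: "'a \<Rightarrow> 'a"
    and T :: "(('a \<Rightarrow> real) \<Rightarrow> real) \<Rightarrow> (('a \<Rightarrow> real) \<Rightarrow> real)"
  assumes f0: "f x0 = x0" and flip: "\<exists>C. C-lipschitz_on UNIV f"
    and T_maps: "\<forall>\<mu>\<in>freespace x0. T \<mu> \<in> freespace x0"
    and T_lin: "\<forall>\<mu>\<in>freespace x0. \<forall>\<nu>\<in>freespace x0. \<forall>a b::real.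
        T (\<lambda>\<phi>. a * \<mu> \<phi> + b * \<nu> \<phi>) = (\<lambda>\<phi>. a * T \<mu> \<phi> + b * T \<nu> \<phi>)"
    and T_bdd: "\<exists>K. \<forall>\<mu>\<in>freespace x0. fnorm x0 (T \<mu>) \<le> K * fnorm x0 \<mu>"
    and T_delta: "\<forall>x. T (delta x0 x) = delta x0 (f x)"
    and int_ne: "\<exists>\<mu>\<in>recurrent_set x0 T. \<exists>\<epsilon>>0. \<forall>\<nu>\<in>freespace x0.
        fnorm x0 (\<nu> - \<mu>) < \<epsilon> \<longrightarrow> \<nu> \<in> recurrent_set x0 T"
    and orbits: "\<forall>x. finite (range (\<lambda>n. (f ^^ n) x))"
  shows "recurrent_set x0 T = freespace x0"
proof -
  have dfree: "(T ^^ n) \<mu> - \<mu> \<in> freespace x0" if "\<mu> \<in> freespace x0" for \<mu> n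
    unfolding minus_lin by (intro free_lin Tn_free[OF T_maps] that)
  have recI: "\<mu> \<in> recurrent_set x0 T \<longleftrightarrow> (\<forall>\<delta>>0. \<forall>N. \<exists>n\<ge>N. fnorm x0 ((T ^^ n) \<mu> - \<mu>) < \<delta>)"
    if "\<mu> \<in> freespace x0" for \<mu>
    unfolding recurrent_set_def using that
    by (subst liminf_zero_iff[symmetric]) (auto intro: fnorm_nonneg free_bnd dfree)
  obtain \<mu>0 \<epsilon> where \<mu>0: "\<mu>0 \<in> recurrent_set x0 T" "\<epsilon> > 0"
    and ball: "\<forall>\<nu>\<in>freespace x0. fnorm x0 (\<nu> - \<mu>0) < \<epsilon> \<longrightarrow> \<nu> \<in> recurrent_set x0 T"
    using int_ne by blast
  have \<mu>0F: "\<mu>0 \<in> freespace x0" using \<mu>0 unfolding recurrent_set_def by auto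
  obtain m0' where m0': "m0' \<in> molecules x0" "\<forall>\<phi>\<in>lipball x0. \<bar>\<mu>0 \<phi> - m0' \<phi>\<bar> \<le> \<epsilon> / 4"
  proof -
    have "\<epsilon> / 4 > 0" using \<mu>0(2) by simp
    then show ?thesis using \<mu>0F that unfolding freespace_def by blast
  qed
  then obtain k a p where m0eq: "m0' = mol x0 k a p" using molecules_mol by blast
  define m0 where "m0 = mol x0 k a p"
  have m0F: "m0 \<in> freespace x0" unfolding m0_def by (rule mol_free)
  have ball2: "\<nu> \<in> recurrent_set x0 T" if "\<nu> \<in> freespace x0" "fnorm x0 (\<nu> - m0) < \<epsilon> / 2" for \<nu>
  proof -
    have e: "\<nu> - \<mu>0 = (\<lambda>\<phi>. 1 * (\<nu> - m0) \<phi> + 1 * (m0 - \<mu>0) \<phi>)" by (rule ext) simp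
    have b1: "bnd x0 (\<nu> - m0)" unfolding minus_lin by (intro bnd_lin free_bnd that m0F)
    have b2: "bnd x0 (m0 - \<mu>0)" unfolding minus_lin by (intro bnd_lin free_bnd \<mu>0F m0F)
    have f2: "fnorm x0 (m0 - \<mu>0) \<le> \<epsilon> / 4"
      using m0' m0eq unfolding m0_def by (intro fnorm_le) (auto simp: abs_minus_commute)
    have "fnorm x0 (\<nu> - \<mu>0) \<le> \<bar>1\<bar> * fnorm x0 (\<nu> - m0) + \<bar>1\<bar> * fnorm x0 (m0 - \<mu>0)"
      unfolding e by (rule fnorm_lin[OF b1 b2])
    also have "\<dots> < \<epsilon>" using that(2) f2 \<mu>0(2) by simp
    finally show ?thesis using ball that(1) by blast
  qed
  have m0R: "m0 \<in> recurrent_set x0 T"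
  proof (rule ball2[OF m0F])
    have "fnorm x0 (m0 - m0) \<le> 0" by (intro fnorm_le) simp
    then show "fnorm x0 (m0 - m0) < \<epsilon> / 2" using \<mu>0(2) by simp
  qed
  then have m0rec: "\<forall>\<delta>>0. \<forall>N. \<exists>n\<ge>N. fnorm x0 ((T ^^ n) m0 - m0) < \<delta>" using recI[OF m0F] by blast
  have Tnm0: "(T ^^ n) m0 = mol x0 k a (\<lambda>i. (f ^^ n) (p i))" for n
    unfolding m0_def by (rule Tn_mol[OF T_lin T_delta])
  define S where "S = (\<Union>i<k. range (\<lambda>n. (f ^^ n) (p i)))"
  have finS: "finite S" unfolding S_def using orbits by auto
  define H where "H = (\<lambda>l. mol x0 k a (\<lambda>i. l ! i))"
  have HG: "(T ^^ n) m0 = H (map (\<lambda>i. (f ^^ n) (p i)) [0..<k])" for n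
    unfolding Tnm0 H_def mol_def by (intro ext sum.cong) auto
  have "range (\<lambda>n. map (\<lambda>i. (f ^^ n) (p i)) [0..<k]) \<subseteq> {xs. set xs \<subseteq> S \<and> length xs = k}"
  proof
    fix xs assume "xs \<in> range (\<lambda>n. map (\<lambda>i. (f ^^ n) (p i)) [0..<k])"
    then obtain n where xs: "xs = map (\<lambda>i. (f ^^ n) (p i)) [0..<k]" by blast
    have "(f ^^ n) (p i) \<in> S" if "i < k" for i
      unfolding S_def using that by (intro UN_I[of i]) auto
    then show "xs \<in> {xs. set xs \<subseteq> S \<and> length xs = k}" unfolding xs by auto
  qed
  then have "finite (range (\<lambda>n. map (\<lambda>i. (f ^^ n) (p i)) [0..<k]))"
    using finite_lists_length_eq[OF finS] finite_subset by blast
  then have finO: "finite (range (\<lambda>n. (T ^^ n) m0))"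
  proof -
    have "range (\<lambda>n. (T ^^ n) m0) = H ` range (\<lambda>n. map (\<lambda>i. (f ^^ n) (p i)) [0..<k])"
      unfolding HG by auto
    then show ?thesis using \<open>finite (range (\<lambda>n. map (\<lambda>i. (f ^^ n) (p i)) [0..<k]))\<close> by simp
  qed
  define D where "D = (\<lambda>v. fnorm x0 (v - m0)) ` range (\<lambda>n. (T ^^ n) m0) \<inter> {0<..}"
  have finD: "finite D" unfolding D_def using finO by auto
  define \<delta>0 where "\<delta>0 = (if D = {} then 1 else Min D)"
  have \<delta>0: "\<delta>0 > 0" unfolding \<delta>0_def D_def using finD D_def by (auto simp: Min_gr_iff)
  obtain n0 where n0: "n0 \<ge> 1" "fnorm x0 ((T ^^ n0) m0 - m0) < \<delta>0" using m0rec \<delta>0 by blast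
  have nn: "0 \<le> fnorm x0 ((T ^^ n0) m0 - m0)" by (intro fnorm_nonneg free_bnd dfree m0F)
  have z: "fnorm x0 ((T ^^ n0) m0 - m0) = 0"
  proof (rule ccontr)
    assume "fnorm x0 ((T ^^ n0) m0 - m0) \<noteq> 0"
    then have "fnorm x0 ((T ^^ n0) m0 - m0) \<in> D" unfolding D_def using nn by auto
    then have "D \<noteq> {}" "Min D \<le> fnorm x0 ((T ^^ n0) m0 - m0)" using finD by auto
    then show False using n0(2) unfolding \<delta>0_def by simp
  qed
  have "(T ^^ n0) m0 - m0 = mol x0 (k + k) (\<lambda>i. if i < k then 1 * a i else (-1) * a (i - k))
      (\<lambda>i. if i < k then (f ^^ n0) (p i) else p (i - k))"
    unfolding minus_lin Tnm0 by (unfold m0_def) (rule mol_lin)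
  with z have "(T ^^ n0) m0 - m0 = (\<lambda>_. 0)" using mol_zero by simp
  then have "\<And>\<phi>. (T ^^ n0) m0 \<phi> - m0 \<phi> = 0" by (metis fun_diff_def)
  then have per: "(T ^^ n0) m0 = m0" by (intro ext) simp
  have perm: "(T ^^ (n0 * j)) m0 = m0" for j
  proof (induction j)
    case 0 then show ?case by simp
  next
    case (Suc j)
    have "(T ^^ (n0 * Suc j)) m0 = (T ^^ n0) ((T ^^ (n0 * j)) m0)" by (simp add: funpow_add)
    then show ?case using Suc per by simp
  qed
  have "\<mu> \<in> recurrent_set x0 T" if \<mu>: "\<mu> \<in> freespace x0" for \<mu>
  proof -
    have fm: "0 \<le> fnorm x0 \<mu>" by (intro fnorm_nonneg free_bnd \<mu>)
    define c where "c = \<epsilon> / (4 * (fnorm x0 \<mu> + 1))"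
    have c: "c > 0" unfolding c_def using \<mu>0(2) fm by simp
    define \<nu> where "\<nu> = (\<lambda>\<phi>. 1 * m0 \<phi> + c * \<mu> \<phi>)"
    have \<nu>F: "\<nu> \<in> freespace x0" unfolding \<nu>_def by (intro free_lin m0F \<mu>)
    have "\<nu> - m0 = (\<lambda>\<phi>. c * \<mu> \<phi> + 0 * \<mu> \<phi>)" unfolding \<nu>_def by (rule ext) simp
    then have "fnorm x0 (\<nu> - m0) \<le> \<bar>c\<bar> * fnorm x0 \<mu> + \<bar>0\<bar> * fnorm x0 \<mu>"
      using fnorm_lin[OF free_bnd[OF \<mu>] free_bnd[OF \<mu>], of c 0] by simp
    also have "\<dots> = c * fnorm x0 \<mu>" using c by simp
    also have "\<dots> \<le> \<epsilon> / 4"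
      unfolding c_def using fm \<mu>0(2) by (simp add: field_simps)
    also have "\<dots> < \<epsilon> / 2" using \<mu>0(2) by simp
    finally have "\<nu> \<in> recurrent_set x0 T" using ball2 \<nu>F by blast
    then have \<nu>rec: "\<forall>\<delta>>0. \<forall>N. \<exists>n\<ge>N. fnorm x0 ((T ^^ n) \<nu> - \<nu>) < \<delta>" using recI[OF \<nu>F] by blast
    have res: "\<forall>\<delta>>0. \<forall>N. \<exists>n\<ge>N. n0 dvd n \<and> fnorm x0 ((T ^^ n) \<nu> - \<nu>) < \<delta>"
      using residue[OF T_maps T_lin T_bdd \<nu>F \<nu>rec] n0(1) by simp
    have "\<forall>\<delta>>0. \<forall>N. \<exists>n\<ge>N. fnorm x0 ((T ^^ n) \<mu> - \<mu>) < \<delta>"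
    proof (intro allI impI)
      fix \<delta> :: real and N assume \<delta>: "\<delta> > 0"
      obtain n where n: "n \<ge> N" "n0 dvd n" "fnorm x0 ((T ^^ n) \<nu> - \<nu>) < \<delta> * c"
        using res \<delta> c by (meson mult_pos_pos)
      obtain j where j: "n = n0 * j" using n(2) by blast
      have Tnu: "(T ^^ n) \<nu> = (\<lambda>\<phi>. 1 * m0 \<phi> + c * (T ^^ n) \<mu> \<phi>)"
        unfolding \<nu>_def Tn_lin[OF T_maps T_lin m0F \<mu>] j perm ..
      have e: "(T ^^ n) \<mu> - \<mu> = (\<lambda>\<phi>. (1 / c) * ((T ^^ n) \<nu> - \<nu>) \<phi> + 0 * ((T ^^ n) \<nu> - \<nu>) \<phi>)"
        unfolding fun_diff_def Tnu using c by (intro ext) (simp add: \<nu>_def field_simps)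
      have "fnorm x0 ((T ^^ n) \<mu> - \<mu>) \<le> \<bar>1 / c\<bar> * fnorm x0 ((T ^^ n) \<nu> - \<nu>) + \<bar>0\<bar> * fnorm x0 ((T ^^ n) \<nu> - \<nu>)"
        unfolding e by (intro fnorm_lin free_bnd dfree \<nu>F)
      also have "\<dots> = fnorm x0 ((T ^^ n) \<nu> - \<nu>) / c" using c by simp
      also have "\<dots> < \<delta>" using n(3) c by (simp add: field_simps)
      finally show "\<exists>n\<ge>N. fnorm x0 ((T ^^ n) \<mu> - \<mu>) < \<delta>" using n(1) by blast
    qed
    then show ?thesis using recI[OF \<mu>] by blast
  qed
  then show ?thesis unfolding recurrent_set_def by auto
qed

end
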